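(* Let $F$ be a field and $n_1,n_2,n_3,n_4$ positive integers; write $\mathrm{Mat}_{a,b}$ for $a\times b$ matrices over $F$. (1) Let $T_{42}\in\mathrm{Mat}_{n_4,n_2}$ and $T_{31}\in\mathrm{Mat}_{n_3,n_1}$. Then the subspace $\{X_{23}\in\mathrm{Mat}_{n_2,n_3} : T_{42}X_{23}=0,\ X_{23}T_{31}=0\}$ has codimension $n_3\operatorname{rank}(T_{42})+n_2\operatorname{rank}(T_{31})-\operatorname{rank}(T_{31})\operatorname{rank}(T_{42})$ in $\mathrm{Mat}_{n_2,n_3}$. (2) Let $T_{31}\in\mathrm{Mat}_{n_3,n_1}$, $T_{42}\in\mathrm{Mat}_{n_4,n_2}$, $T_{41}\in\mathrm{Mat}_{n_4,n_1}$, and assume that the row spaces of $T_{31}$ and $T_{41}$ (subspaces of $F^{n_1}$) intersect trivially and that the column spaces of $T_{42}$ and $T_{41}$ (subspaces of $F^{n_4}$) intersect trivially. Then the subspace $\{(X_{12},X_{34})\in\mathrm{Mat}_{n_1,n_2}\times\mathrm{Mat}_{n_3,n_4} : T_{31}X_{12}=X_{34}T_{42},\ T_{41}X_{12}=0,\ X_{34}T_{41}=0\}$ has codimension $\operatorname{rank}(T_{41})n_2+\operatorname{rank}(T_{41})n_3+\operatorname{rank}(T_{31})\operatorname{rank}(T_{42})+(n_2-\operatorname{rank}(T_{42}))\operatorname{rank}(T_{31})+(n_3-\operatorname{rank}(T_{31}))\operatorname{rank}(T_{42})$ in $\mathrm{Mat}_{n_1,n_2}\times\mathrm{Mat}_{n_3,n_4}$.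 *)

theory Defs
  imports "HOL-Analysis.Analysis"
begin

text \<open>Matrices of size a x b over a field are 'a^'b^'a (finite index types).
  They form a vector space over 'a under entrywise scaling.\<close>

definition mscale :: "'a::field \<Rightarrow> 'a^'n^'m \<Rightarrow> 'a^'n^'m" where
  "mscale c A = (\<chi> i j. c * A $ i $ j)"

definition pscale :: "'a::field \<Rightarrow> ('a^'n^'m) \<times> ('a^'q^'p) \<Rightarrow> ('a^'n^'m) \<times> ('a^'q^'p)" where
  "pscale c XY = (mscale c (fst XY), mscale c (snd XY))"

abbreviation mdim :: "('a::field^'n^'m) set \<Rightarrow> nat" where
  "mdim S \<equiv> vector_space.dim mscale S"

abbreviation pdim :: "(('a::field^'n^'m) \<times> ('a^'q^'p)) set \<Rightarrow> nat" where
  "pdim S \<equiv> vector_space.dim pscale S"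

definition row_space :: "'a::field^'n^'m \<Rightarrow> ('a^'n) set" where
  "row_space A = vec.span (rows A)"

definition col_space :: "'a::field^'n^'m \<Rightarrow> ('a^'m) set" where
  "col_space A = vec.span (columns A)"

end

theory Submission
  imports Defs
begin

interpretation mat: vector_space "mscale :: 'a::field \<Rightarrow> 'a^'n^'m \<Rightarrow> 'a^'n^'m"
  by unfold_locales (simp_all add: mscale_def vec_eq_iff algebra_simps)

interpretation matp: vector_space_prod "mscale :: 'a::field \<Rightarrow> 'a^'n^'m \<Rightarrow> 'a^'n^'m"
   "mscale :: 'a::field \<Rightarrow> 'a^'q^'p \<Rightarrow> 'a^'q^'p" ..

lemma pscale_eq: "pscale = module_prod.scale mscale mscale"
  by (intro ext) (simp add: pscale_def matp.scale_def)

context finite_dimensional_vector_space_pair_1 begin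
lemma rank_nullity_sub:
  assumes lf: "Vector_Spaces.linear s1 s2 f" and S: "vs1.subspace S"
  shows "vs1.dim S = vs1.dim (S \<inter> {x. f x = 0}) + vs2.dim (f ` S)"
proof -
  interpret lf: Vector_Spaces.linear s1 s2 f by fact
  obtain B0 where B0: "B0 \<subseteq> S \<inter> {x. f x = 0}" "vs1.independent B0"
      "S \<inter> {x. f x = 0} \<subseteq> vs1.span B0" "card B0 = vs1.dim (S \<inter> {x. f x = 0})"
    using vs1.basis_exists by blast
  obtain C where C: "B0 \<subseteq> C" "C \<subseteq> S" "vs1.independent C" "S \<subseteq> vs1.span C"
    using vs1.maximal_independent_subset_extend[of B0 S] B0 by blast
  have finC: "finite C" using C(3) vs1.finiteI_independent by blast
  have spanC: "vs1.span C = S" using vs1.span_minimal[OF C(2) S] C(4) by blast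
  have dimS: "vs1.dim S = card C"
  proof -
    have "vs1.dim S = vs1.dim (vs1.span C)" using spanC by simp
    also have "\<dots> = vs1.dim C" by (rule vs1.dim_span)
    also have "\<dots> = card C" by (rule vs1.dim_eq_card_independent[OF C(3)])
    finally show ?thesis .
  qed
  define D where "D = C - B0"
  have finB0: "finite B0" using finC C(1) finite_subset by blast
  have cardC: "card C = card B0 + card D"
    unfolding D_def using card_Diff_subset[OF finB0 C(1)] card_mono[OF finC C(1)] by linarith
  have indD: "vs1.independent D" using C(3) vs1.independent_mono D_def by blast
  have BD: "B0 \<union> D = C" using C(1) D_def by auto
  have spanS: "S = {x + y |x y. x \<in> vs1.span B0 \<and> y \<in> vs1.span D}"
    using vs1.span_Un[of B0 D] spanC BD by simp
  have subK: "vs1.subspace (S \<inter> {x. f x = 0})"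
    by (rule vs1.subspace_inter[OF S lf.subspace_kernel])
  have spanB0: "vs1.span B0 \<subseteq> S \<inter> {x. f x = 0}"
    by (rule vs1.span_minimal[OF B0(1) subK])
  have spanD: "vs1.span D \<subseteq> S"
    using vs1.span_mono[of D C] D_def spanC by auto
  have int0: "vs1.span B0 \<inter> vs1.span D = {0}"
  proof -
    have "vs1.dim S + vs1.dim (vs1.span B0 \<inter> vs1.span D)
        = vs1.dim (vs1.span B0) + vs1.dim (vs1.span D)"
      by (subst spanS) (rule vs1.dim_sums_Int; simp)
    moreover have "vs1.dim (vs1.span B0) = card B0"
      using B0(2) vs1.dim_eq_card_independent by simp
    moreover have "vs1.dim (vs1.span D) = card D"
      using indD vs1.dim_eq_card_independent by simp
    ultimately have "vs1.dim (vs1.span B0 \<inter> vs1.span D) = 0"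
      using dimS cardC by linarith
    then show ?thesis using vs1.span_zero by (auto simp: vs1.dim_eq_0)
  qed
  have img: "f ` S = f ` vs1.span D"
  proof
    show "f ` S \<subseteq> f ` vs1.span D"
    proof
      fix z assume "z \<in> f ` S"
      then obtain x y where xy: "x \<in> vs1.span B0" "y \<in> vs1.span D" "z = f (x + y)"
        using spanS by auto
      have "x \<in> S \<inter> {x. f x = 0}"
        using xy(1) spanB0 by blast
      then have "z = f y" using xy lf.add by simp
      then show "z \<in> f ` vs1.span D" using xy by auto
    qed
    show "f ` vs1.span D \<subseteq> f ` S"
      using spanD by auto
  qed
  have inj: "inj_on f (vs1.span D)"
  proof (rule lf.inj_on_iff_eq_0[THEN iffD2])
    show "vs1.subspace (vs1.span D)" by simp
    show "\<forall>x\<in>vs1.span D. f x = 0 \<longrightarrow> x = 0"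
    proof safe
      fix x assume x: "x \<in> vs1.span D" "f x = 0"
      have "x \<in> S" using x spanD by auto
      then have "x \<in> vs1.span B0" using B0(3) x by auto
      then show "x = 0" using int0 x by auto
    qed
  qed
  have "vs2.dim (f ` S) = vs2.dim (f ` vs1.span D)" by (simp add: img)
  also have "\<dots> = vs1.dim (vs1.span D)" using dim_image_eq[OF lf, of "vs1.span D"] inj by (simp add: vs1.span_span)
  also have "\<dots> = card D" using indD by (simp add: vs1.dim_eq_card_independent)
  finally have "vs2.dim (f ` S) = card D" .
  then show ?thesis using dimS cardC B0(4) by linarith
qed
end

definition outer :: "'a::field^'m \<Rightarrow> 'a^'n \<Rightarrow> 'a^'n^'m" where
  "outer u w = (\<chi> i j. u$i * w$j)"

definition MS :: "('a::field^'m) set \<Rightarrow> ('a^'n) set \<Rightarrow> ('a^'n^'m) set" where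
  "MS U W = {X. (\<forall>j. column j X \<in> U) \<and> (\<forall>i. row i X \<in> W)}"

lemma MS_subspace:
  assumes "vec.subspace U" "vec.subspace W"
  shows "mat.subspace (MS U W :: ('a::field^'n^'m) set)"
proof -
  have c: "column j (X + Y) = column j X + column j Y" "column j (mscale c X) = c *s column j X"
    "column j 0 = 0" for j and X Y :: "'a^'n^'m" and c
    by (simp_all add: column_def mscale_def vec_eq_iff)
  have r: "row i (X + Y) = row i X + row i Y" "row i (mscale c X) = c *s row i X"
    "row i 0 = 0" for i and X Y :: "'a^'n^'m" and c
    by (simp_all add: row_def mscale_def vec_eq_iff)
  have "0 \<in> MS U W" using assms by (simp add: MS_def c r vec.subspace_0)
  moreover have "X + Y \<in> MS U W" if "X \<in> MS U W" "Y \<in> MS U W" for X Y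
    using that assms by (simp add: MS_def c r vec.subspace_add)
  moreover have "mscale a X \<in> MS U W" if "X \<in> MS U W" for a X
    using that assms by (simp add: MS_def c r vec.subspace_scale)
  ultimately show ?thesis unfolding mat.subspace_def by blast
qed

lemma vec_indep_coeffs:
  assumes "vec.independent B" "(\<Sum>v\<in>B. u v *s v) = 0" "v \<in> B"
  shows "u v = 0"
proof -
  have "\<forall>c. (\<Sum>v\<in>B. c v *s v) = 0 \<longrightarrow> (\<forall>v\<in>B. c v = 0)"
    using vec.independent_explicit[THEN iffD1, OF assms(1)] by (rule conjunct2)
  then show ?thesis using assms(2,3) by blast
qed

lemma outer_indexed_indep:
  assumes BU: "vec.independent BU" and BW: "vec.independent BW"
    and c: "(\<Sum>p\<in>BU \<times> BW. mscale (c p) (outer (fst p) (snd p))) = 0"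
    and p: "p \<in> BU \<times> BW"
  shows "c p = 0"
proof -
  have fU: "finite BU" and fW: "finite BW" using BU BW vec.finiteI_independent by auto
  have e: "(\<Sum>u\<in>BU. (\<Sum>w\<in>BW. c (u,w) * w$j) *s u) = 0" for j
  proof -
    have "(\<Sum>u\<in>BU. (\<Sum>w\<in>BW. c (u,w) * w$j) *s u) $ i = 0" for i
    proof -
      have "0 = (\<Sum>p\<in>BU \<times> BW. mscale (c p) (outer (fst p) (snd p))) $ i $ j"
        using c by simp
      also have "\<dots> = (\<Sum>p\<in>BU \<times> BW. c p * ((fst p) $ i * (snd p) $ j))"
        by (simp add: mscale_def outer_def)
      also have "\<dots> = (\<Sum>u\<in>BU. \<Sum>w\<in>BW. c (u,w) * (u $ i * w $ j))"
        by (simp add: sum.cartesian_product split_def)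
      also have "\<dots> = (\<Sum>u\<in>BU. (\<Sum>w\<in>BW. c (u,w) * w$j) *s u) $ i"
        by (simp add: sum_distrib_left algebra_simps)
      finally show ?thesis by simp
    qed
    then show ?thesis by (simp add: vec_eq_iff)
  qed
  have "\<forall>u\<in>BU. (\<Sum>w\<in>BW. c (u,w) * w$j) = 0" for j
    using vec_indep_coeffs[OF BU e[of j]] by blast
  then have "\<forall>u\<in>BU. (\<Sum>w\<in>BW. c (u,w) *s w) = 0"
    by (simp add: vec_eq_iff)
  then have "\<forall>u\<in>BU. \<forall>w\<in>BW. c (u,w) = 0"
  proof (intro ballI)
    fix u w assume "u \<in> BU" "w \<in> BW"
    then show "c (u, w) = 0"
      using vec_indep_coeffs[OF BW, of "\<lambda>w. c (u, w)" w] \<open>\<forall>u\<in>BU. (\<Sum>w\<in>BW. c (u,w) *s w) = 0\<close> by blast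
  qed
  then show ?thesis using p by auto
qed


lemma col_axis_sum: "column j X = (\<Sum>i\<in>UNIV. X$i$j *s axis i (1::'a::field))"
  by (simp add: vec_eq_iff column_def axis_def if_distrib cong: if_cong)

lemma outer_lin2: "outer u (\<Sum>w\<in>B. c w *s w) = (\<Sum>w\<in>B. mscale (c w) (outer u w))"
proof (cases "finite B")
  case True
  then show ?thesis by (simp add: vec_eq_iff outer_def mscale_def sum_component sum_distrib_left algebra_simps)
next
  case False
  then show ?thesis by (simp add: vec_eq_iff outer_def)
qed

lemma outer_inj:
  assumes BU: "vec.independent BU" and BW: "vec.independent BW"
  shows "inj_on (\<lambda>p. outer (fst p) (snd p) :: 'a::field^'n^'m) (BU \<times> BW)"
proof (rule inj_onI, rule ccontr)
  let ?O = "\<lambda>p. outer (fst p) (snd p) :: 'a::field^'n^'m"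
  fix p q assume p: "p \<in> BU \<times> BW" and q: "q \<in> BU \<times> BW" and e: "?O p = ?O q" and ne: "p \<noteq> q"
  have fin: "finite (BU \<times> BW)" using vec.finiteI_independent[OF BU] vec.finiteI_independent[OF BW] by simp
  define c where "c r = (if r = p then 1 else if r = q then -1 else (0::'a))" for r
  have "(\<Sum>r\<in>BU \<times> BW. mscale (c r) (?O r)) = mscale (c p) (?O p) + (\<Sum>r\<in>BU \<times> BW - {p}. mscale (c r) (?O r))"
    by (rule sum.remove[OF fin p])
  also have "(\<Sum>r\<in>BU \<times> BW - {p}. mscale (c r) (?O r)) = mscale (c q) (?O q) + (\<Sum>r\<in>BU \<times> BW - {p} - {q}. mscale (c r) (?O r))"
    by (rule sum.remove) (use fin q ne in auto)
  also have "(\<Sum>r\<in>BU \<times> BW - {p} - {q}. mscale (c r) (?O r)) = 0"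
    by (rule sum.neutral) (auto simp: c_def)
  finally have "(\<Sum>r\<in>BU \<times> BW. mscale (c r) (?O r)) = 0"
    using e ne by (simp add: c_def mscale_def vec_eq_iff)
  then have "c p = 0" using outer_indexed_indep[OF BU BW _ p] by blast
  then show False by (simp add: c_def)
qed

lemma outer_basis:
  assumes BU: "vec.independent (BU :: ('a::field^'m) set)" and BW: "vec.independent (BW :: ('a^'n) set)"
  defines "TB \<equiv> (\<lambda>p. outer (fst p) (snd p)) ` (BU \<times> BW)"
  shows "mat.independent TB" "TB \<subseteq> MS (vec.span BU) (vec.span BW)"
    "MS (vec.span BU) (vec.span BW) \<subseteq> mat.span TB" "card TB = card BU * card BW"
proof -
  let ?O = "\<lambda>p. outer (fst p) (snd p) :: 'a::field^'n^'m"
  have fU: "finite BU" and fW: "finite BW" using vec.finiteI_independent[OF BU] vec.finiteI_independent[OF BW] by simp_all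
  have fin: "finite (BU \<times> BW)" using fU fW by auto
  have inj: "inj_on ?O (BU \<times> BW)" by (rule outer_inj[OF BU BW])
  show "card TB = card BU * card BW"
    unfolding TB_def using card_image[OF inj] by (simp add: card_cartesian_product)
  show "mat.independent TB"
  proof -
    have "\<forall>d. (\<Sum>t\<in>TB. mscale (d t) t) = 0 \<longrightarrow> (\<forall>t\<in>TB. d t = 0)"
    proof (intro allI impI ballI)
      fix d t assume s: "(\<Sum>t\<in>TB. mscale (d t) t) = 0" and t: "t \<in> TB"
      have "(\<Sum>p\<in>BU \<times> BW. mscale (d (?O p)) (?O p)) = 0"
        using s unfolding TB_def by (simp add: sum.reindex[OF inj])
      moreover obtain p where p: "p \<in> BU \<times> BW" "t = ?O p" using t TB_def by auto
      ultimately show "d t = 0" using outer_indexed_indep[OF BU BW, of "\<lambda>p. d (?O p)" p] by simp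
    qed
    moreover have "finite TB" unfolding TB_def using fin by simp
    ultimately show ?thesis using mat.dependent_finite by blast
  qed
  show "TB \<subseteq> MS (vec.span BU) (vec.span BW)"
  proof
    fix t assume "t \<in> TB"
    then obtain u w where uw: "u \<in> BU" "w \<in> BW" "t = outer u w" unfolding TB_def by auto
    have col: "column j t = w$j *s u" for j by (simp add: uw outer_def column_def vec_eq_iff mult.commute)
    have row: "row i t = u$i *s w" for i by (simp add: uw outer_def row_def vec_eq_iff)
    show "t \<in> MS (vec.span BU) (vec.span BW)"
      unfolding MS_def
    proof (intro CollectI conjI allI)
      show "column j t \<in> vec.span BU" for j
        unfolding col by (rule vec.span_scale[OF vec.span_base[OF uw(1)]])
      show "row i t \<in> vec.span BW" for i
        unfolding row by (rule vec.span_scale[OF vec.span_base[OF uw(2)]])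
    qed
  qed
  show "MS (vec.span BU) (vec.span BW) \<subseteq> mat.span TB"
  proof
    fix X assume X: "X \<in> MS (vec.span BU) (vec.span BW)"
    obtain BU' where BU': "BU \<subseteq> BU'" "BU' \<subseteq> UNIV" "vec.independent BU'" "UNIV \<subseteq> vec.span BU'"
      by (rule vec.maximal_independent_subset_extend[OF subset_UNIV BU])
    have spanU': "vec.span BU' = UNIV" using BU'(4) by auto
    define \<rho> where "\<rho> u v = vec.representation BU' v u" for u v
    define a where "a u = (\<chi> j. \<rho> u (column j X))" for u
    have a_in: "a u \<in> vec.span BW" for u
    proof -
      interpret R: Vector_Spaces.linear "(*s)" "(*) :: 'a \<Rightarrow> 'a \<Rightarrow> 'a" "\<lambda>v. \<rho> u v"
        unfolding \<rho>_def by (rule vec.linear_representation[OF BU'(3) spanU'])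
      have "\<rho> u (column j X) = (\<Sum>i\<in>UNIV. X$i$j * \<rho> u (axis i 1))" for j
        by (simp add: col_axis_sum R.sum R.scale)
      then have "a u = (\<Sum>i\<in>UNIV. \<rho> u (axis i 1) *s row i X)"
        by (simp add: a_def vec_eq_iff row_def mult.commute)
      also have "\<dots> \<in> vec.span BW"
        using X unfolding MS_def by (auto intro!: vec.span_sum vec.span_scale)
      finally show ?thesis .
    qed
    have Xsum: "X = (\<Sum>u\<in>BU. outer u (a u))"
    proof -
      have "X$i$j = (\<Sum>u\<in>BU. outer u (a u))$i$j" for i j
      proof -
        have cj: "column j X \<in> vec.span BU" using X unfolding MS_def by auto
        have "column j X = (\<Sum>u\<in>BU. vec.representation BU (column j X) u *s u)"
          using vec.sum_representation_eq[OF BU cj fU order_refl] by simp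
        moreover have "vec.representation BU (column j X) = vec.representation BU' (column j X)"
          using vec.representation_extend[OF BU'(3) cj BU'(1)] by simp
        ultimately have "column j X = (\<Sum>u\<in>BU. \<rho> u (column j X) *s u)"
          by (simp add: \<rho>_def)
        then have "(column j X)$i = (\<Sum>u\<in>BU. \<rho> u (column j X) *s u)$i" by simp
        then show ?thesis by (simp add: column_def outer_def a_def mult.commute)
      qed
      then show ?thesis by (simp add: vec_eq_iff)
    qed
    have "outer u (a u) \<in> mat.span TB" if u: "u \<in> BU" for u
    proof -
      define cc where "cc = vec.representation BW (a u)"
      have "a u = (\<Sum>w\<in>BW. cc w *s w)"
        unfolding cc_def using vec.sum_representation_eq[OF BW a_in fW order_refl] by simp
      then have "outer u (a u) = (\<Sum>w\<in>BW. mscale (cc w) (outer u w))"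
        using outer_lin2[of u cc BW] by simp
      also have "\<dots> \<in> mat.span TB"
      proof (rule mat.span_sum, rule mat.span_scale, rule mat.span_base)
        fix w assume "w \<in> BW"
        then show "outer u w \<in> TB" using u unfolding TB_def by (auto intro!: image_eqI[of _ _ "(u, w)"])
      qed
      finally show ?thesis .
    qed
    then show "X \<in> mat.span TB" by (subst Xsum) (auto intro!: mat.span_sum)
  qed
qed


lemma MS_dim:
  assumes U: "vec.subspace (U :: ('a::field^'m) set)" and W: "vec.subspace (W :: ('a^'n) set)"
  shows "mat.dim (MS U W :: ('a^'n^'m) set) = vec.dim U * vec.dim W"
proof -
  obtain BU where BU: "BU \<subseteq> U" "vec.independent BU" "U \<subseteq> vec.span BU" "card BU = vec.dim U"
    by (rule vec.basis_exists)
  obtain BW where BW: "BW \<subseteq> W" "vec.independent BW" "W \<subseteq> vec.span BW" "card BW = vec.dim W"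
    by (rule vec.basis_exists)
  have sU: "vec.span BU = U" using vec.span_minimal[OF BU(1) U] BU(3) by blast
  have sW: "vec.span BW = W" using vec.span_minimal[OF BW(1) W] BW(3) by blast
  define TB where "TB = (\<lambda>p. outer (fst p) (snd p) :: 'a^'n^'m) ` (BU \<times> BW)"
  note ob = outer_basis[OF BU(2) BW(2), folded TB_def]
  have "card TB = mat.dim (MS U W :: ('a^'n^'m) set)"
    by (rule mat.basis_card_eq_dim) (use ob sU sW in auto)
  then show ?thesis using ob(4) BU(4) BW(4) by simp
qed

lemma MS_UNIV: "MS UNIV UNIV = UNIV"
  by (simp add: MS_def)

definition TBasis :: "('a::field^'n^'m) set" where
  "TBasis = (\<lambda>p. outer (fst p) (snd p)) ` (cart_basis \<times> cart_basis)"

lemma TBasis_props: "finite (TBasis :: ('a::field^'n^'m) set)" "mat.independent (TBasis :: ('a::field^'n^'m) set)"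
  "mat.span (TBasis :: ('a::field^'n^'m) set) = UNIV"
proof -
  note ob = outer_basis[OF independent_cart_basis independent_cart_basis, folded TBasis_def]
  show "finite (TBasis :: ('a::field^'n^'m) set)" unfolding TBasis_def by (simp add: finite_cart_basis)
  show "mat.independent (TBasis :: ('a::field^'n^'m) set)" using ob(1) .
  show "mat.span (TBasis :: ('a::field^'n^'m) set) = UNIV" using ob(3) by (auto simp: MS_UNIV)
qed

interpretation matf: finite_dimensional_vector_space "mscale :: 'a::field \<Rightarrow> 'a^'n^'m \<Rightarrow> 'a^'n^'m" TBasis
  by unfold_locales (rule TBasis_props)+

interpretation matfp: finite_dimensional_vector_space_prod "mscale :: 'a::field \<Rightarrow> 'a^'n^'m \<Rightarrow> 'a^'n^'m"
   "mscale :: 'a::field \<Rightarrow> 'a^'q^'p \<Rightarrow> 'a^'q^'p" TBasis TBasis ..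

lemma mat_dim_UNIV: "mat.dim (UNIV :: ('a::field^'n^'m) set) = CARD('m) * CARD('n)"
  using MS_dim[OF vec.subspace_UNIV vec.subspace_UNIV, where 'a='a and 'm='m and 'n='n]
  by (simp add: MS_UNIV vec_dim_card card_cart_basis)

lemma vec_pair1: "finite_dimensional_vector_space_pair_1 ((*s)::'a::field \<Rightarrow> 'a^'n \<Rightarrow> _) cart_basis ((*s)::'a \<Rightarrow> 'a^'m \<Rightarrow> _)"
  by unfold_locales

definition dotv :: "'a::field^'n \<Rightarrow> 'a^'n \<Rightarrow> 'a" where
  "dotv r x = (\<Sum>j\<in>UNIV. r$j * x$j)"

lemma ann_span: "{x. \<forall>r\<in>R. dotv r x = 0} = {x. \<forall>r\<in>vec.span R. dotv r x = 0}"
proof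
  show "{x. \<forall>r\<in>vec.span R. dotv r x = 0} \<subseteq> {x. \<forall>r\<in>R. dotv r x = 0}"
    using vec.span_base by blast
  show "{x. \<forall>r\<in>R. dotv r x = 0} \<subseteq> {x. \<forall>r\<in>vec.span R. dotv r x = 0}"
  proof clarify
    fix x r assume x: "\<forall>r\<in>R. dotv r x = 0" and r: "r \<in> vec.span R"
    have d0: "dotv 0 x = 0" by (simp add: dotv_def)
    have da: "dotv (a + b) x = dotv a x + dotv b x" for a b by (simp add: dotv_def sum.distrib distrib_right)
    have ds: "dotv (c *s a) x = c * dotv a x" for c a by (simp add: dotv_def sum_distrib_left mult.assoc)
    have sub: "vec.subspace {r. dotv r x = 0}"
      unfolding vec.subspace_def by (simp add: d0 da ds)
    have "vec.span R \<subseteq> {r. dotv r x = 0}"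
      by (rule vec.span_minimal) (use x sub in auto)
    then show "dotv r x = 0" using r by auto
  qed
qed

lemma mv_dotv: "(A *v x) $ i = dotv (row i A) x"
  by (simp add: matrix_vector_mult_def dotv_def row_def)

lemma ANN:
  fixes R :: "('a::field^'n) set"
  shows "vec.dim {x. \<forall>r\<in>R. dotv r x = 0} + vec.dim R = CARD('n)"
proof -
  obtain B where B: "B \<subseteq> vec.span R" "vec.independent B" "vec.span R \<subseteq> vec.span B"
      "card B = vec.dim (vec.span R)"
    by (rule vec.basis_exists)
  obtain B' where B': "B \<subseteq> B'" "B' \<subseteq> UNIV" "vec.independent B'" "UNIV \<subseteq> vec.span B'"
    by (rule vec.maximal_independent_subset_extend[OF subset_UNIV B(2)])
  have finB': "finite B'" using B'(3) vec.finiteI_independent by blast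
  have "card B' = vec.dim (UNIV :: ('a^'n) set)"
    by (rule vec.basis_card_eq_dim) (use B' in auto)
  then have cardB': "card B' = CARD('n)" by (simp add: card_cart_basis)
  obtain g where g: "bij_betw g (UNIV :: 'n set) B'"
    using finite_same_card_bij[OF finite finB'] cardB' by auto
  define M :: "'a^'n^'n" where "M = (\<chi> i. g i)"
  have rowsM: "rows M = B'"
    using g unfolding rows_def row_def M_def bij_betw_def by (auto simp: vec_nth_inverse)
  have "vec.span (rows M) = UNIV" using rowsM B'(4) by auto
  then obtain P where PM: "P ** M = mat 1" using matrix_left_invertible_span_rows_gen by blast
  then have MP: "M ** P = mat 1" using matrix_left_right_inverse by blast
  define I where "I = {i. g i \<in> B}"
  have gI: "g ` I = B" using g B'(1) unfolding I_def bij_betw_def by auto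
  have cardI: "card I = card B"
    using gI g unfolding bij_betw_def by (metis card_image inj_on_subset subset_UNIV)
  have spanRB: "vec.span R = vec.span B"
    using B(1,3) vec.span_minimal[of B "vec.span R"] vec.span_mono by auto
  have annB: "{x. \<forall>r\<in>R. dotv r x = 0} = {x. \<forall>r\<in>B. dotv r x = 0}"
    using ann_span[of R] ann_span[of B] spanRB by simp
  have rowM: "row i M = g i" for i by (simp add: M_def row_def vec_eq_iff)
  define D where "D = {y :: 'a^'n. \<forall>i. i \<notin> - I \<longrightarrow> y$i = 0}"
  have annD: "{x. \<forall>r\<in>B. dotv r x = 0} = (\<lambda>y. P *v y) ` D"
  proof
    show "{x. \<forall>r\<in>B. dotv r x = 0} \<subseteq> (\<lambda>y. P *v y) ` D"
    proof
      fix x assume x: "x \<in> {x. \<forall>r\<in>B. dotv r x = 0}"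
      have "M *v x \<in> D" using x unfolding D_def I_def by (auto simp: mv_dotv rowM)
      moreover have "x = P *v (M *v x)" by (simp add: matrix_vector_mul_assoc PM)
      ultimately show "x \<in> (\<lambda>y. P *v y) ` D" by blast
    qed
    show "(\<lambda>y. P *v y) ` D \<subseteq> {x. \<forall>r\<in>B. dotv r x = 0}"
    proof clarify
      fix y r assume y: "y \<in> D" and r: "r \<in> B"
      obtain i where i: "i \<in> I" "r = g i" using r gI by auto
      have "M *v (P *v y) = y" by (simp add: matrix_vector_mul_assoc MP)
      then have "dotv r (P *v y) = y $ i" using i by (metis mv_dotv rowM)
      then show "dotv r (P *v y) = 0" using y i unfolding D_def by auto
    qed
  qed
  have injP: "inj ((*v) P)"
  proof (rule injI)
    fix x y assume "P *v x = P *v y"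
    then have "M *v (P *v x) = M *v (P *v y)" by simp
    then show "x = y" by (simp add: matrix_vector_mul_assoc MP)
  qed
  have "vec.dim ((\<lambda>y. P *v y) ` D) = vec.dim D"
    using finite_dimensional_vector_space_pair_1.dim_image_eq[OF vec_pair1 matrix_vector_mul_linear_gen, of P D]
      injP by (simp add: inj_on_subset)
  also have "\<dots> = card (- I)" unfolding D_def by (rule dim_substandard_cart)
  also have "\<dots> = CARD('n) - card I" by (simp add: Compl_eq_Diff_UNIV card_Diff_subset)
  finally have "vec.dim {x. \<forall>r\<in>R. dotv r x = 0} = CARD('n) - card B" using annB annD cardI by simp
  moreover have "card B \<le> CARD('n)" using cardI card_mono[of UNIV I] by simp
  moreover have "vec.dim R = card B" using B(4) by simp
  ultimately show ?thesis by simp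
qed

lemma nullity:
  fixes A :: "'a::field^'n^'m"
  shows "vec.dim {x. A *v x = 0} + rank A = CARD('n)"
proof -
  have e: "A *v x = 0 \<longleftrightarrow> (\<forall>i. dotv (row i A) x = 0)" for x
    by (simp add: vec_eq_iff mv_dotv)
  have "{x. A *v x = 0} = {x. \<forall>r\<in>rows A. dotv r x = 0}"
    by (auto simp: e rows_def)
  then show ?thesis using ANN[of "rows A"] by (simp add: row_rank_def_gen)
qed

lemma column_mv: "column j A = A *v axis j 1"
  by (simp add: vec_eq_iff column_def matrix_vector_mult_def axis_def if_distrib cong: if_cong)

lemma range_mv: "range ((*v) A) = vec.span (columns (A :: 'a::field^'n^'m))"
proof
  show "range ((*v) A) \<subseteq> vec.span (columns A)" using matrix_vector_mult_in_columnspace_gen by blast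
  have "columns A \<subseteq> range ((*v) A)" unfolding columns_def using column_mv by blast
  moreover have "vec.subspace (range ((*v) A))"
    by (rule vec.subspace_image[OF vec.subspace_UNIV])
  ultimately show "vec.span (columns A) \<subseteq> range ((*v) A)" by (rule vec.span_minimal)
qed

lemma colrank:
  fixes A :: "'a::field^'n^'m"
  shows "vec.dim (columns A) = rank A"
proof -
  have "vec.dim (UNIV :: ('a^'n) set) = vec.dim (UNIV \<inter> {x. A *v x = 0}) + vec.dim ((*v) A ` UNIV)"
    by (rule finite_dimensional_vector_space_pair_1.rank_nullity_sub[OF vec_pair1 matrix_vector_mul_linear_gen vec.subspace_UNIV])
  then have "CARD('n) = vec.dim {x. A *v x = 0} + vec.dim (columns A)"
    by (simp add: range_mv card_cart_basis)
  then show ?thesis using nullity[of A] by simp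
qed

lemma rank_transpose_gen: "rank (transpose A) = rank (A :: 'a::field^'n^'m)"
  unfolding row_rank_def_gen[of "transpose A"] rows_transpose using colrank[of A] by simp


lemma ker_rows: "{x. A *v x = 0} = {x. \<forall>r\<in>rows A. dotv r x = 0}"
proof -
  have e: "A *v x = 0 \<longleftrightarrow> (\<forall>i. dotv (row i A) x = 0)" for x
    by (simp add: vec_eq_iff mv_dotv)
  show ?thesis by (auto simp: e rows_def)
qed

lemma ker_subspace: "vec.subspace {x. (A :: 'a::field^'n^'m) *v x = 0}"
  by (rule vec.subspace_kernel)

lemma surj_ker:
  fixes A :: "'a::field^'n^'k" and C :: "'a^'n^'l"
  assumes int: "vec.span (rows A) \<inter> vec.span (rows C) = {0}" and y: "y \<in> vec.span (columns A)"
  shows "\<exists>x. C *v x = 0 \<and> A *v x = y"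
proof -
  define N where "N = {x. C *v x = 0}"
  have subN: "vec.subspace N" unfolding N_def by (rule ker_subspace)
  have rn: "vec.dim N = vec.dim (N \<inter> {x. A *v x = 0}) + vec.dim ((*v) A ` N)"
    by (rule finite_dimensional_vector_space_pair_1.rank_nullity_sub[OF vec_pair1 matrix_vector_mul_linear_gen subN])
  have n1: "vec.dim N + rank C = CARD('n)" unfolding N_def by (rule nullity)
  have "N \<inter> {x. A *v x = 0} = {x. \<forall>r\<in>rows A \<union> rows C. dotv r x = 0}"
    unfolding N_def ker_rows by auto
  then have n2: "vec.dim (N \<inter> {x. A *v x = 0}) + vec.dim (rows A \<union> rows C) = CARD('n)"
    using ANN[of "rows A \<union> rows C"] by simp
  have "vec.dim (rows A \<union> rows C) = vec.dim (vec.span (rows A \<union> rows C))" by simp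
  also have "\<dots> = vec.dim {a + b |a b. a \<in> vec.span (rows A) \<and> b \<in> vec.span (rows C)}"
    by (simp add: vec.span_Un)
  finally have "vec.dim (rows A \<union> rows C) + vec.dim (vec.span (rows A) \<inter> vec.span (rows C))
      = vec.dim (vec.span (rows A)) + vec.dim (vec.span (rows C))"
    using vec.dim_sums_Int[OF vec.subspace_span vec.subspace_span, of "rows A" "rows C"] by simp
  then have n3: "vec.dim (rows A \<union> rows C) = rank A + rank C"
    using int by (simp add: row_rank_def_gen)
  have dimimg: "vec.dim ((*v) A ` N) = rank A" using rn n1 n2 n3 by linarith
  have sub1: "vec.subspace ((*v) A ` N)" by (rule vec.subspace_image[OF subN])
  have sub2: "vec.subspace (vec.span (columns A))" by simp
  have incl: "(*v) A ` N \<subseteq> vec.span (columns A)" using matrix_vector_mult_in_columnspace_gen by blast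
  have "vec.dim (vec.span (columns A)) = rank A" using colrank[of A] by simp
  then have "(*v) A ` N = vec.span (columns A)"
    using vec.subspace_dim_equal[OF sub1 sub2 incl] dimimg by simp
  then have "y \<in> (*v) A ` N" using y by simp
  then obtain x where "x \<in> N" "y = A *v x" by blast
  then show ?thesis unfolding N_def by auto
qed

lemma mat_eq_cols: "(Y = Z) \<longleftrightarrow> (\<forall>j. column j Y = column j Z)"
  by (auto simp: vec_eq_iff column_def)

lemma mat_eq_rows: "(Y = Z) \<longleftrightarrow> (\<forall>i. row i Y = row i Z)"
  by (auto simp: vec_eq_iff row_def)

lemma col_mult: "column j (A ** X) = A *v column j X"
  by (simp add: vec_eq_iff column_def matrix_matrix_mult_def matrix_vector_mult_def)

lemma row_mult: "row i (X ** B) = transpose B *v row i (X :: 'a::comm_semiring_1^'n^'m)"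
  unfolding vec_eq_iff row_def matrix_matrix_mult_def matrix_vector_mult_def transpose_def
  by (auto intro!: sum.cong simp: mult.commute)

lemma col_zero: "column j 0 = 0" by (simp add: vec_eq_iff column_def)
lemma row_zero: "row i 0 = 0" by (simp add: vec_eq_iff row_def)

lemma MS_kerL: "X \<in> MS {x. A *v x = 0} UNIV \<longleftrightarrow> A ** X = 0"
  by (simp add: MS_def mat_eq_cols[of "A ** X"] col_mult col_zero)

lemma MS_kerR: "Y \<in> MS UNIV {x. transpose B *v x = 0} \<longleftrightarrow> Y ** B = 0"
  by (simp add: MS_def mat_eq_rows[of "Y ** B"] row_mult row_zero)

lemma mscale_mult_left: "A ** mscale c X = mscale c (A ** X)"
  by (simp add: vec_eq_iff mscale_def matrix_matrix_mult_def sum_distrib_left algebra_simps)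

lemma mscale_mult_right: "mscale c Y ** B = mscale c (Y ** B)"
  by (simp add: vec_eq_iff mscale_def matrix_matrix_mult_def sum_distrib_left algebra_simps)

lemma add_mult: "(X + Y) ** B = X ** B + Y ** (B :: 'a::comm_semiring_1^'n^'m)"
  by (simp add: vec_eq_iff matrix_matrix_mult_def sum.distrib distrib_right)

lemma neg_mult: "(- Y) ** B = - (Y ** (B :: 'a::comm_ring_1^'n^'m))"
  by (simp add: vec_eq_iff matrix_matrix_mult_def sum_negf[symmetric])

lemma part1:
  fixes T42 :: "'a::field^'n2^'n4" and T31 :: "'a^'n1^'n3"
  shows "int (mdim (UNIV :: ('a^'n3^'n2) set))
      - int (mdim {X23 :: 'a^'n3^'n2. T42 ** X23 = 0 \<and> X23 ** T31 = 0})
    = int CARD('n3) * int (rank T42) + int CARD('n2) * int (rank T31)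
      - int (rank T31) * int (rank T42)"
proof -
  have S: "{X23 :: 'a^'n3^'n2. T42 ** X23 = 0 \<and> X23 ** T31 = 0}
      = MS {x. T42 *v x = 0} {x. transpose T31 *v x = 0}"
    by (auto simp: MS_def mat_eq_cols[of "T42 ** _"] mat_eq_rows[of "_ ** T31"] col_mult row_mult col_zero row_zero)
  have d: "mdim {X23 :: 'a^'n3^'n2. T42 ** X23 = 0 \<and> X23 ** T31 = 0}
      = vec.dim {x. T42 *v x = 0} * vec.dim {x. transpose T31 *v x = 0}"
    unfolding S by (rule MS_dim[OF ker_subspace ker_subspace])
  have n1: "vec.dim {x. T42 *v x = 0} + rank T42 = CARD('n2)" by (rule nullity)
  have n2: "vec.dim {x. transpose T31 *v x = 0} + rank T31 = CARD('n3)"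
    using nullity[of "transpose T31"] rank_transpose_gen[of T31] by simp
  have u: "mdim (UNIV :: ('a^'n3^'n2) set) = CARD('n2) * CARD('n3)" by (rule mat_dim_UNIV)
  show ?thesis
    unfolding d u n1[symmetric] n2[symmetric] by (simp add: algebra_simps)
qed


lemma part2:
  fixes T42 :: "'a::field^'n2^'n4" and T31 :: "'a^'n1^'n3" and T41 :: "'a^'n1^'n4"
  assumes h1: "row_space T31 \<inter> row_space T41 = {0}" and h2: "col_space T42 \<inter> col_space T41 = {0}"
  shows "int (pdim (UNIV :: (('a^'n2^'n1) \<times> ('a^'n4^'n3)) set))
      - int (pdim {(X12 :: 'a^'n2^'n1, X34 :: 'a^'n4^'n3).
                     T31 ** X12 = X34 ** T42 \<and> T41 ** X12 = 0 \<and> X34 ** T41 = 0})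
    = int (rank T41) * int CARD('n2) + int (rank T41) * int CARD('n3)
      + int (rank T31) * int (rank T42)
      + (int CARD('n2) - int (rank T42)) * int (rank T31)
      + (int CARD('n3) - int (rank T31)) * int (rank T42)"
proof -
  let ?ps = "module_prod.scale (mscale :: 'a \<Rightarrow> 'a^'n2^'n1 \<Rightarrow> _) (mscale :: 'a \<Rightarrow> 'a^'n4^'n3 \<Rightarrow> _)"
  define V1 :: "('a^'n2^'n1) set" where "V1 = MS {x. T41 *v x = 0} UNIV"
  define V2 :: "('a^'n4^'n3) set" where "V2 = MS UNIV {x. transpose T41 *v x = 0}"
  define \<phi> :: "('a^'n2^'n1) \<times> ('a^'n4^'n3) \<Rightarrow> 'a^'n2^'n3" where "\<phi> p = T31 ** fst p - snd p ** T42" for p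
  have lin: "Vector_Spaces.linear ?ps mscale \<phi>"
    unfolding Vector_Spaces.linear_iff
    by (simp add: matp.p.vector_space_axioms mat.vector_space_axioms \<phi>_def matp.scale_def
        matrix_add_ldistrib add_mult mscale_mult_left mscale_mult_right mat.scale_right_diff_distrib)
  have pr: "finite_dimensional_vector_space_pair_1 ?ps matfp.Basis_pair (mscale :: 'a \<Rightarrow> 'a^'n2^'n3 \<Rightarrow> _)"
    by (rule finite_dimensional_vector_space_pair_1.intro[OF matfp.p.finite_dimensional_vector_space_axioms mat.vector_space_axioms])
  have subV1: "mat.subspace V1" unfolding V1_def by (rule MS_subspace[OF ker_subspace vec.subspace_UNIV])
  have subV2: "mat.subspace V2" unfolding V2_def by (rule MS_subspace[OF vec.subspace_UNIV ker_subspace])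
  have subV: "matp.p.subspace (V1 \<times> V2)" by (rule matp.subspace_Times[OF subV1 subV2])
  have kL: "X \<in> V1 \<longleftrightarrow> T41 ** X = 0" for X unfolding V1_def by (rule MS_kerL)
  have kR: "Y \<in> V2 \<longleftrightarrow> Y ** T41 = 0" for Y unfolding V2_def by (rule MS_kerR)
  have K: "{(X12 :: 'a^'n2^'n1, X34 :: 'a^'n4^'n3). T31 ** X12 = X34 ** T42 \<and> T41 ** X12 = 0 \<and> X34 ** T41 = 0}
      = (V1 \<times> V2) \<inter> {p. \<phi> p = 0}"
    by (auto simp: kL kR \<phi>_def)
  have rn: "matp.p.dim (V1 \<times> V2) = matp.p.dim ((V1 \<times> V2) \<inter> {p. \<phi> p = 0}) + mat.dim (\<phi> ` (V1 \<times> V2))"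
    by (rule finite_dimensional_vector_space_pair_1.rank_nullity_sub[OF pr lin subV])
  have dV: "matp.p.dim (V1 \<times> V2) = mat.dim V1 + mat.dim V2"
    by (rule matfp.dim_Times[OF subV1 subV2])
  have dV1: "mat.dim V1 = vec.dim {x. T41 *v x = 0} * CARD('n2)"
    unfolding V1_def using MS_dim[OF ker_subspace vec.subspace_UNIV] by (simp add: card_cart_basis)
  have dV2: "mat.dim V2 = CARD('n3) * vec.dim {x. transpose T41 *v x = 0}"
    unfolding V2_def using MS_dim[OF vec.subspace_UNIV ker_subspace[of "transpose T41"]] by (simp add: card_cart_basis)
  define AA :: "('a^'n2^'n3) set" where "AA = MS (vec.span (columns T31)) UNIV"
  define BB :: "('a^'n2^'n3) set" where "BB = MS UNIV (vec.span (rows T42))"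
  have h1': "vec.span (rows T31) \<inter> vec.span (rows T41) = {0}" using h1 by (simp add: row_space_def)
  have h2': "vec.span (rows (transpose T42)) \<inter> vec.span (rows (transpose T41)) = {0}"
    using h2 by (simp add: col_space_def)
  have img: "\<phi> ` (V1 \<times> V2) = {a + b |a b. a \<in> AA \<and> b \<in> BB}"
  proof
    show "\<phi> ` (V1 \<times> V2) \<subseteq> {a + b |a b. a \<in> AA \<and> b \<in> BB}"
    proof clarify
      fix X Y assume "X \<in> V1" "Y \<in> V2"
      have e: "\<phi> (X, Y) = T31 ** X + (- Y) ** T42" by (simp add: \<phi>_def neg_mult)
      have "T31 ** X \<in> AA" unfolding AA_def MS_def
        by (simp add: col_mult matrix_vector_mult_in_columnspace_gen)
      moreover have "(- Y) ** T42 \<in> BB" unfolding BB_def MS_def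
        using matrix_vector_mult_in_columnspace_gen[of "transpose T42"] by (simp add: row_mult)
      ultimately show "\<exists>a b. \<phi> (X, Y) = a + b \<and> a \<in> AA \<and> b \<in> BB" using e by blast
    qed
    show "{a + b |a b. a \<in> AA \<and> b \<in> BB} \<subseteq> \<phi> ` (V1 \<times> V2)"
    proof clarify
      fix a b assume a: "a \<in> AA" and b: "b \<in> BB"
      have "\<forall>j. \<exists>x. T41 *v x = 0 \<and> T31 *v x = column j a"
        using surj_ker[OF h1'] a unfolding AA_def MS_def by blast
      then obtain xf where xf: "\<And>j. T41 *v xf j = 0" "\<And>j. T31 *v xf j = column j a" by metis
      define X :: "'a^'n2^'n1" where "X = (\<chi> i j. xf j $ i)"
      have cX: "column j X = xf j" for j by (simp add: X_def column_def vec_eq_iff)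
      have X1: "X \<in> V1" unfolding V1_def MS_def by (simp add: cX xf)
      have X2: "T31 ** X = a" unfolding mat_eq_cols[of "T31 ** X"] by (simp add: col_mult cX xf)
      have "\<forall>i. \<exists>z. transpose T41 *v z = 0 \<and> transpose T42 *v z = row i b"
        using surj_ker[OF h2'] b unfolding BB_def MS_def by simp
      then obtain zf where zf: "\<And>i. transpose T41 *v zf i = 0" "\<And>i. transpose T42 *v zf i = row i b" by metis
      define Y :: "'a^'n4^'n3" where "Y = (\<chi> i. zf i)"
      have rY: "row i Y = zf i" for i by (simp add: Y_def row_def vec_eq_iff)
      have Y1: "Y ** T41 = 0" unfolding mat_eq_rows[of "Y ** T41"] by (simp add: row_mult rY zf(1)[simplified] row_zero)
      have Y2: "Y ** T42 = b" unfolding mat_eq_rows[of "Y ** T42"] by (simp add: row_mult rY zf(2)[simplified])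
      have "- Y \<in> V2" unfolding kR by (simp add: neg_mult Y1)
      moreover have "\<phi> (X, - Y) = a + b" by (simp add: \<phi>_def neg_mult X2 Y2)
      ultimately show "a + b \<in> \<phi> ` (V1 \<times> V2)" using X1 by (metis SigmaI image_eqI)
    qed
  qed
  have subAA: "mat.subspace AA" unfolding AA_def by (rule MS_subspace[OF vec.subspace_span vec.subspace_UNIV])
  have subBB: "mat.subspace BB" unfolding BB_def by (rule MS_subspace[OF vec.subspace_UNIV vec.subspace_span])
  have AB: "AA \<inter> BB = MS (vec.span (columns T31)) (vec.span (rows T42))"
    unfolding AA_def BB_def MS_def by auto
  have sums: "mat.dim {a + b |a b. a \<in> AA \<and> b \<in> BB} + mat.dim (AA \<inter> BB) = mat.dim AA + mat.dim BB"
    by (rule matf.dim_sums_Int[OF subAA subBB])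
  have r31: "vec.dim (vec.span (columns T31)) = rank T31" using colrank[of T31] by simp
  have r42: "vec.dim (vec.span (rows T42)) = rank T42" by (simp add: row_rank_def_gen)
  have dAA: "mat.dim AA = rank T31 * CARD('n2)"
    unfolding AA_def using MS_dim[OF vec.subspace_span vec.subspace_UNIV, of "columns T31"] r31
    by (simp add: card_cart_basis)
  have dBB: "mat.dim BB = CARD('n3) * rank T42"
    unfolding BB_def using MS_dim[OF vec.subspace_UNIV vec.subspace_span, of "rows T42"] r42
    by (simp add: card_cart_basis)
  have dAB: "mat.dim (AA \<inter> BB) = rank T31 * rank T42"
    unfolding AB using MS_dim[OF vec.subspace_span vec.subspace_span, of "columns T31" "rows T42"] r31 r42
    by simp
  have dU: "matp.p.dim (UNIV :: (('a^'n2^'n1) \<times> ('a^'n4^'n3)) set) = CARD('n1) * CARD('n2) + CARD('n3) * CARD('n4)"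
    using matfp.dim_Times[OF mat.subspace_UNIV mat.subspace_UNIV] by (simp only: UNIV_Times_UNIV mat_dim_UNIV)
  have n1: "vec.dim {x. T41 *v x = 0} + rank T41 = CARD('n1)" by (rule nullity)
  have n4: "vec.dim {x. transpose T41 *v x = 0} + rank T41 = CARD('n4)"
    using nullity[of "transpose T41"] rank_transpose_gen[of T41] by simp
  have main: "matp.p.dim {(X12 :: 'a^'n2^'n1, X34 :: 'a^'n4^'n3). T31 ** X12 = X34 ** T42 \<and> T41 ** X12 = 0 \<and> X34 ** T41 = 0}
      + rank T31 * CARD('n2) + CARD('n3) * rank T42
      = vec.dim {x. T41 *v x = 0} * CARD('n2) + CARD('n3) * vec.dim {x. transpose T41 *v x = 0}
      + rank T31 * rank T42"
    using rn dV dV1 dV2 sums dAA dBB dAB unfolding K img[symmetric] by linarith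
  show ?thesis
    unfolding pscale_eq dU n1[symmetric] n4[symmetric]
    using arg_cong[OF main, of int]
    by (simp add: algebra_simps)
qed

theorem lemma3p3:
  fixes T42 :: "'a::field^'n2^'n4" and T31 :: "'a^'n1^'n3" and T41 :: "'a^'n1^'n4"
  shows
   "(int (mdim (UNIV :: ('a^'n3^'n2) set))
      - int (mdim {X23 :: 'a^'n3^'n2. T42 ** X23 = 0 \<and> X23 ** T31 = 0})
    = int CARD('n3) * int (rank T42) + int CARD('n2) * int (rank T31)
      - int (rank T31) * int (rank T42))
  \<and>
   (row_space T31 \<inter> row_space T41 = {0} \<longrightarrow> col_space T42 \<inter> col_space T41 = {0} \<longrightarrow>
    int (pdim (UNIV :: (('a^'n2^'n1) \<times> ('a^'n4^'n3)) set))
      - int (pdim {(X12 :: 'a^'n2^'n1, X34 :: 'a^'n4^'n3).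
                     T31 ** X12 = X34 ** T42 \<and> T41 ** X12 = 0 \<and> X34 ** T41 = 0})
    = int (rank T41) * int CARD('n2) + int (rank T41) * int CARD('n3)
      + int (rank T31) * int (rank T42)
      + (int CARD('n2) - int (rank T42)) * int (rank T31)
      + (int CARD('n3) - int (rank T31)) * int (rank T42))"
  using part1[of T42 T31] part2[of T31 T41 T42] by blast

end
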